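(* Let $q$ be a prime power, let $A(X) \in \mathbb{F}_q[X]$, and let $$A(X) = \sum_{i \geq 0} A_i(X) \Lambda^i(X), \qquad \deg(A_i) < q \text{ for all } i,$$ be the base-$\Lambda(X)$ expansion of $A(X)$, where $\Lambda(X) = X^q - X$. Then $$\mathsf{pdeg}(A) = \max_{i \geq 0} \deg(A_i).$$
   Context: For $A(X) \in \mathbb{F}_q[X]$, $A^{[\ell]}(X)$ denotes the $\ell$-th Hasse derivative: the coefficient of $Z^\ell$ in the expansion of $A(X+Z)$ as a polynomial in $Z$. The $\ell$-th pseudoderivative is $A_{\langle \ell \rangle}(X) = A^{[\ell]}(X) \bmod \Lambda(X)$ (the unique polynomial of degree at most $q-1$ agreeing with $A^{[\ell]}$ on all of $\mathbb{F}_q$). The pseudodegree is $\mathsf{pdeg}(A) = \max_{\ell \geq 0} \deg(A_{\langle \ell \rangle})$. *)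

theory Defs
  imports "HOL-Computational_Algebra.Polynomial" "HOL-Library.Cardinality"
begin

definition Lambda :: "'a::{finite,field} poly" where
  "Lambda = monom 1 (CARD('a)) - [:0, 1:]"

text \<open>Hasse derivative: the coefficient of Z^l in A(X+Z), where A(X+Z) is viewed as a
  polynomial in Z with coefficients in F[X] (outer poly variable = Z).\<close>
definition hasse :: "nat \<Rightarrow> 'a::comm_ring_1 poly \<Rightarrow> 'a poly" where
  "hasse l A = coeff (pcompose (map_poly (\<lambda>c. [:c:]) A) [:[:0, 1:], 1:]) l"

definition pseudoderiv :: "nat \<Rightarrow> 'a::{finite,field} poly \<Rightarrow> 'a poly" where
  "pseudoderiv l A = hasse l A mod Lambda"

definition pdeg :: "'a::{finite,field} poly \<Rightarrow> nat" where
  "pdeg A = Max {degree (pseudoderiv l A) | l. True}"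

end

theory Submission
  imports Defs
begin

definition KK :: "'a::comm_ring_1 poly \<Rightarrow> 'a poly poly" where
  "KK = map_poly (\<lambda>c. [:c:])"

definition CC :: "'a::comm_ring_1 poly \<Rightarrow> 'a poly poly" where
  "CC A = pcompose (KK A) [:[:0, 1:], 1:]"

lemma hasse_CC: "hasse l A = coeff (CC A) l"
  by (simp add: hasse_def CC_def KK_def)

lemma coeff_KK [simp]: "coeff (KK p) n = [:coeff p n:]"
  by (simp add: KK_def coeff_map_poly)

lemma const_add: "[:a + b:] = [:a:] + [:b:]"
  by simp

lemma const_sum: "[:sum f S:] = (\<Sum>x\<in>S. [:f x:])"
  by (induction S rule: infinite_finite_induct) (auto simp: const_add)

lemma degree_KK [simp]: "degree (KK p) = degree p"
  unfolding KK_def by (rule degree_map_poly) simp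

lemma KK_mult: "KK (p * q) = KK p * KK q"
  by (rule poly_eqI) (simp add: coeff_mult const_sum mult.commute)

lemma KK_add: "KK (p + q) = KK p + KK q"
  by (rule poly_eqI) simp

lemma KK_diff: "KK (p - q) = KK p - KK q"
  by (rule poly_eqI) simp

lemma KK_0 [simp]: "KK 0 = 0"
  by (simp add: KK_def)

lemma KK_1: "KK 1 = 1"
  by (simp add: KK_def)

lemma KK_pow: "KK (p ^ n) = KK p ^ n"
  by (induction n) (simp_all add: KK_1 KK_mult)

lemma KK_sum: "KK (sum f S) = (\<Sum>x\<in>S. KK (f x))"
  by (induction S rule: infinite_finite_induct) (simp_all add: KK_add)

lemma CC_mult: "CC (p * q) = CC p * CC q"
  by (simp add: CC_def KK_mult pcompose_mult)

lemma CC_add: "CC (p + q) = CC p + CC q"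
  by (simp add: CC_def KK_add pcompose_add)

lemma CC_1: "CC 1 = 1"
  by (simp add: CC_def KK_1 pcompose_1)

lemma CC_pow: "CC (p ^ n) = CC p ^ n"
  by (induction n) (simp_all add: CC_1 CC_mult)

lemma CC_sum: "CC (sum f S) = (\<Sum>x\<in>S. CC (f x))"
  by (simp add: CC_def KK_sum pcompose_sum)

lemma X_pow: "([:0, 1:] :: 'a::comm_semiring_1 poly) ^ n = monom 1 n"
  by (simp add: monom_altdef)

lemma coeff_hasse:
  fixes A :: "'a::comm_ring_1 poly"
  shows "coeff (hasse j A) m = of_nat ((m + j) choose j) * coeff A (m + j)"
proof -
  let ?Y = "[:[:0, 1:], 1:] :: 'a poly poly"
  have deg: "degree (KK (KK A)) = degree A"
    by simp
  have "CC A = poly (KK (KK A)) ?Y" by (simp add: CC_def pcompose_altdef KK_def)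
  also have "\<dots> = (\<Sum>k\<le>degree A. [:[:coeff A k:]:] * ?Y ^ k)"
    unfolding poly_altdef deg by simp
  finally have "hasse j A = (\<Sum>k\<le>degree A. [:coeff A k:] * coeff (?Y ^ k) j)"
    by (simp add: hasse_CC coeff_sum)
  also have "\<dots> = (\<Sum>k\<le>degree A. [:coeff A k:] * (if j \<le> k then of_nat (k choose j) * [:0,1:] ^ (k - j) else 0))"
    by (intro sum.cong refl) (auto simp: coeff_linear_poly_power coeff_eq_0 degree_linear_power)
  finally have H: "hasse j A = (\<Sum>k\<le>degree A. [:coeff A k:] * (if j \<le> k then of_nat (k choose j) * [:0,1:] ^ (k - j) else 0))" .
  have "coeff (hasse j A) m = (\<Sum>k\<le>degree A. coeff A k * (if j \<le> k \<and> k - j = m then of_nat (k choose j) else 0))"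
    unfolding H coeff_sum by (intro sum.cong refl) (auto simp: of_nat_poly X_pow coeff_monom)
  also have "\<dots> = (\<Sum>k\<le>degree A. if k = m + j then coeff A k * of_nat (k choose j) else 0)"
    by (intro sum.cong refl) auto
  also have "\<dots> = of_nat ((m + j) choose j) * coeff A (m + j)"
    by (simp add: sum.delta' coeff_eq_0 mult.commute)
  finally show ?thesis .
qed

lemma card_ge2: "2 \<le> CARD('a::{finite,field})"
proof -
  have "card {0, 1::'a} \<le> CARD('a)" by (rule card_mono) auto
  thus ?thesis by simp
qed

lemma pow_card: fixes x :: "'a::{finite,field}" shows "x ^ CARD('a) = x"
proof (cases "x = 0")
  case False
  have "x * (\<Prod>y\<in>UNIV-{0}. x * y) = x * x ^ (card (UNIV :: 'a set) - 1) * \<Prod>(UNIV-{0})"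
    by (simp add: prod.distrib mult_ac)
  also have "x * x ^ (card (UNIV :: 'a set) - 1) = x ^ Suc (card (UNIV :: 'a set) - 1)"
    by (subst power_Suc) auto
  also have "Suc (card (UNIV :: 'a set) - 1) = card (UNIV :: 'a set)"
    using finite_UNIV_card_ge_0[where ?'a = 'a] by simp
  also have "(\<Prod>y\<in>UNIV-{0}. x * y) = (\<Prod>y\<in>UNIV-{0}. y)"
    by (rule prod.reindex_bij_witness[of _ "\<lambda>y. y / x" "\<lambda>y. x * y"]) (use False in auto)
  finally show ?thesis
    by simp
qed (use finite_UNIV_card_ge_0[where ?'a = 'a] in auto)

lemma binom_zero:
  assumes "0 < l" "l < CARD('a::{finite,field})"
  shows "(of_nat (CARD('a) choose l) :: 'a) = 0"
proof -
  define q where "q = CARD('a)"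
  define P :: "'a poly" where "P = [:1,1:] ^ q - monom 1 q - 1"
  have q2: "2 \<le> q" using card_ge2 q_def by simp
  have roots: "poly P x = 0" for x
    using pow_card[of "1 + x"] pow_card[of x] by (simp add: P_def poly_monom q_def algebra_simps)
  have cP: "coeff P k = (if k \<le> q then of_nat (q choose k) else 0) - (if k = q then 1 else 0) - (if k = 0 then 1 else 0)" for k
  proof (cases "k \<le> q")
    case True thus ?thesis by (simp add: P_def coeff_linear_poly_power coeff_monom)
  next
    case False thus ?thesis by (simp add: P_def coeff_monom coeff_eq_0 degree_linear_power)
  qed
  have "P = 0"
  proof (rule ccontr)
    assume "P \<noteq> 0"
    hence "card {x. poly P x = 0} \<le> degree P" by (rule card_poly_roots_bound)
    moreover have "degree P \<le> q - 1"
      by (rule degree_le) (use q2 in \<open>auto simp: cP\<close>)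
    ultimately show False using roots q2 by (simp add: q_def)
  qed
  hence "coeff P l = 0" by simp
  thus ?thesis using assms by (simp add: cP q_def)
qed

lemma coeff_Lambda: "coeff (Lambda :: 'a::{finite,field} poly) k =
    (if k = CARD('a) then 1 else 0) - (if k = 1 then 1 else 0)"
  by (auto simp: Lambda_def coeff_monom coeff_pCons split: nat.split)

lemma degree_Lambda: "degree (Lambda :: 'a::{finite,field} poly) = CARD('a)"
proof (rule antisym)
  show "degree (Lambda :: 'a poly) \<le> CARD('a)"
    by (rule degree_le) (use card_ge2[where 'a='a] in \<open>auto simp: coeff_Lambda\<close>)
  show "CARD('a) \<le> degree (Lambda :: 'a poly)"
    by (rule le_degree) (use card_ge2[where 'a='a] in \<open>auto simp: coeff_Lambda\<close>)
qed

lemma lead_Lambda: "lead_coeff (Lambda :: 'a::{finite,field} poly) = 1"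
  using card_ge2[where 'a='a] by (simp add: degree_Lambda coeff_Lambda)

lemma CC_Lambda: "CC (Lambda :: 'a::{finite,field} poly) = [:Lambda:] + KK Lambda"
proof (rule poly_eqI, rule poly_eqI)
  fix j m
  have q2: "2 \<le> CARD('a)" by (rule card_ge2)
  have L: "coeff (coeff (CC (Lambda :: 'a poly)) j) m = of_nat ((m + j) choose j) * coeff Lambda (m + j)"
    by (simp add: coeff_hasse flip: hasse_CC)
  have R: "coeff (coeff ([:Lambda:] + KK (Lambda :: 'a poly)) j) m =
     (if j = 0 then coeff Lambda m else 0) + (if m = 0 then coeff Lambda j else 0)"
    by (simp add: coeff_pCons split: nat.split)
  show "coeff (coeff (CC (Lambda :: 'a poly)) j) m = coeff (coeff ([:Lambda:] + KK Lambda) j) m"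
    unfolding L R
  proof (cases "j = 0")
    case True thus "of_nat ((m + j) choose j) * coeff Lambda (m + j) =
     (if j = 0 then coeff Lambda m else 0) + (if m = 0 then coeff (Lambda :: 'a poly) j else 0)"
      using q2 by (simp add: coeff_Lambda)
  next
    case False
    show "of_nat ((m + j) choose j) * coeff Lambda (m + j) =
     (if j = 0 then coeff Lambda m else 0) + (if m = 0 then coeff (Lambda :: 'a poly) j else 0)"
    proof (cases "m = 0")
      case True thus ?thesis using False by simp
    next
      case m: False
      have "of_nat ((m + j) choose j) * coeff (Lambda :: 'a poly) (m + j) = 0"
      proof (cases "m + j = CARD('a)")
        case True
        hence "(of_nat ((m + j) choose j) :: 'a) = 0"
          using binom_zero[of j, where 'a='a] False m by simp
        thus ?thesis by simp
      next
        case F: False thus ?thesis using False m by (simp add: coeff_Lambda)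
      qed
      thus ?thesis using False m by simp
    qed
  qed
qed

lemma dvd_pow_diff: "(a::'a::comm_ring_1) dvd (a + b) ^ i - b ^ i"
proof (induction i)
  case (Suc i)
  have "(a + b) ^ Suc i - b ^ Suc i = (a + b) * ((a + b) ^ i - b ^ i) + a * b ^ i"
    by (simp add: algebra_simps)
  thus ?case using Suc by simp
qed simp

theorem lemma5p3:
  fixes A :: "'a::{finite,field} poly"
    and Ai :: "nat \<Rightarrow> 'a poly"
    and n :: nat
  assumes "A = (\<Sum>i\<le>n. Ai i * Lambda ^ i)"
    and "\<forall>i\<le>n. degree (Ai i) < CARD('a)"
  shows "pdeg A = Max ((\<lambda>i. degree (Ai i)) ` {..n})"
proof -
  have LN: "(Lambda :: 'a poly) \<noteq> 0" using lead_Lambda[where 'a='a] by auto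
  define q where "q = CARD('a)"
  define d where "d = Max ((\<lambda>i. degree (Ai i)) ` {..n})"
  have q2: "2 \<le> q" using card_ge2 q_def by simp
  have hd: "degree (Ai i) \<le> d" if "i \<le> n" for i
    unfolding d_def using that by (intro Max_ge) auto
  have "d \<in> (\<lambda>i. degree (Ai i)) ` {..n}"
    unfolding d_def by (intro Max_in) auto
  then obtain k where k: "k \<le> n" "degree (Ai k) = d" by auto
  have dq: "d < q" using k assms(2) q_def by auto
  define M :: "'a poly poly" where "M = [:Lambda:]"
  define Y :: "'a poly poly" where "Y = KK Lambda"
  have "\<forall>i. \<exists>R. (M + Y) ^ i = Y ^ i + M * R"
  proof
    fix i
    obtain R where "(M + Y) ^ i - Y ^ i = M * R" using dvd_pow_diff[of M Y i] by (auto elim: dvdE)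
    hence "(M + Y) ^ i = Y ^ i + M * R" by (simp add: algebra_simps)
    thus "\<exists>R. (M + Y) ^ i = Y ^ i + M * R" ..
  qed
  then obtain Rf where Rf: "\<And>i. (M + Y) ^ i = Y ^ i + M * Rf i" by metis
  define S where "S = (\<Sum>i\<le>n. CC (Ai i) * KK (Lambda ^ i))"
  define R where "R = (\<Sum>i\<le>n. CC (Ai i) * Rf i)"
  have CCA: "CC A = S + M * R"
  proof -
    have "CC A = (\<Sum>i\<le>n. CC (Ai i) * (M + Y) ^ i)"
      unfolding assms(1) CC_sum CC_mult CC_pow CC_Lambda M_def Y_def ..
    also have "\<dots> = (\<Sum>i\<le>n. CC (Ai i) * Y ^ i + M * (CC (Ai i) * Rf i))"
      unfolding Rf by (simp add: algebra_simps)
    also have "\<dots> = S + M * R"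
      unfolding S_def R_def Y_def by (simp add: sum.distrib sum_distrib_left KK_pow)
    finally show ?thesis .
  qed
  define B where "B l = coeff S l" for l
  have cB: "coeff (B l) m = (\<Sum>i\<le>n. \<Sum>j\<le>l. of_nat ((m + j) choose j) * coeff (Ai i) (m + j) * coeff (Lambda ^ i) (l - j))" for l m
    unfolding B_def S_def by (simp add: coeff_sum coeff_mult coeff_hasse mult_ac flip: hasse_CC)
  have degB: "degree (B l) \<le> d" for l
  proof (rule degree_le, intro allI impI)
    fix m assume "d < m"
    have "coeff (Ai i) (m + j) = 0" if "i \<le> n" for i j
      using hd[OF that] \<open>d < m\<close> by (intro coeff_eq_0) simp
    thus "coeff (B l) m = 0" unfolding cB by simp
  qed
  have pd: "pseudoderiv l A = B l" for l
  proof -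
    have "hasse l A = B l + Lambda * coeff R l"
      unfolding hasse_CC CCA B_def M_def by simp
    hence "pseudoderiv l A = B l mod Lambda"
      unfolding pseudoderiv_def by simp
    also have "\<dots> = B l"
      using degB[of l] dq by (intro mod_poly_less) (simp add: degree_Lambda q_def)
    finally show ?thesis .
  qed
  have dS: "d \<in> {degree (pseudoderiv l A) | l. True}"
  proof (cases "\<exists>i\<le>n. coeff (Ai i) d \<noteq> 0")
    case True
    define I where "I = {i. i \<le> n \<and> coeff (Ai i) d \<noteq> 0}"
    define i0 where "i0 = Max I"
    have finI: "finite I" unfolding I_def by simp
    have "I \<noteq> {}" using True unfolding I_def by auto
    hence i0I: "i0 \<in> I" unfolding i0_def using finI by (intro Max_in)
    have i0max: "coeff (Ai i) d = 0" if "i \<le> n" "i0 < i" for i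
    proof (rule ccontr)
      assume "coeff (Ai i) d \<noteq> 0"
      hence "i \<in> I" using that unfolding I_def by simp
      hence "i \<le> i0" unfolding i0_def using finI by (rule Max_ge[rotated])
      thus False using that by simp
    qed
    define l where "l = q * i0"
    have inner: "(\<Sum>j\<le>l. of_nat ((d + j) choose j) * coeff (Ai i) (d + j) * coeff (Lambda ^ i) (l - j))
        = coeff (Ai i) d * coeff (Lambda ^ i) l" if "i \<le> n" for i
    proof -
      have "(\<Sum>j\<le>l. of_nat ((d + j) choose j) * coeff (Ai i) (d + j) * coeff (Lambda ^ i) (l - j))
         = (\<Sum>j\<le>l. if j = 0 then coeff (Ai i) d * coeff (Lambda ^ i) l else 0)"
      proof (intro sum.cong refl)
        fix j assume "j \<in> {..l}"
        show "of_nat ((d + j) choose j) * coeff (Ai i) (d + j) * coeff (Lambda ^ i) (l - j)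
           = (if j = 0 then coeff (Ai i) d * coeff (Lambda ^ i) l else 0)"
        proof (cases "j = 0")
          case False
          hence "coeff (Ai i) (d + j) = 0" using hd[OF that] by (intro coeff_eq_0) simp
          thus ?thesis using False by simp
        qed simp
      qed
      thus ?thesis by simp
    qed
    have outer: "coeff (Ai i) d * coeff (Lambda ^ i) l = (if i = i0 then coeff (Ai i0) d else 0)"
      if "i \<le> n" for i
    proof -
      consider "i < i0" | "i = i0" | "i0 < i" by linarith
      thus ?thesis
      proof cases
        case 1
        have "degree ((Lambda :: 'a poly) ^ i) = q * i"
          by (simp add: degree_power_eq[OF LN] degree_Lambda q_def mult.commute)
        also have "\<dots> < l" using 1 q2 unfolding l_def by simp
        finally have "coeff ((Lambda :: 'a poly) ^ i) l = 0" by (intro coeff_eq_0)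
        thus ?thesis using 1 by simp
      next
        case 2
        have "degree ((Lambda :: 'a poly) ^ i) = l"
          using 2 by (simp add: degree_power_eq[OF LN] degree_Lambda q_def mult.commute l_def)
        hence "coeff ((Lambda :: 'a poly) ^ i) l = 1"
          by (metis lead_coeff_power lead_Lambda power_one)
        thus ?thesis using 2 by simp
      next
        case 3 thus ?thesis using i0max[OF that] by simp
      qed
    qed
    have "i0 \<le> n" using i0I unfolding I_def by simp
    have "coeff (B l) d = coeff (Ai i0) d"
      unfolding cB using inner outer \<open>i0 \<le> n\<close> by simp
    hence "coeff (B l) d \<noteq> 0" using i0I unfolding I_def by simp
    hence "d \<le> degree (B l)" by (rule le_degree)
    hence "degree (pseudoderiv l A) = d" using degB[of l] pd by simp
    thus ?thesis by (metis (mono_tags, lifting) mem_Collect_eq)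
  next
    case False
    hence "coeff (Ai k) (degree (Ai k)) = 0" using k by auto
    hence "Ai k = 0" by simp
    hence "d = 0" using k by simp
    hence "degree (pseudoderiv 0 A) = d" using degB[of 0] pd by simp
    thus ?thesis by (metis (mono_tags, lifting) mem_Collect_eq)
  qed
  have le: "y \<le> d" if "y \<in> {degree (pseudoderiv l A) | l. True}" for y
    using that degB pd by auto
  have fin: "finite {degree (pseudoderiv l A) | l. True}"
    by (rule finite_subset[of _ "{..d}"]) (use le in auto)
  have "pdeg A = d"
    unfolding pdeg_def using fin le dS by (intro Max_eqI) auto
  thus ?thesis unfolding d_def .
qed

end
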